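(* Let $k\in\mathbb{N}$, $P$ the uniform distribution on $[0,1]$, $\beta=\{\frac jk:1\leq j\leq k\}$, and $J_{k,j}=[\frac{j-1}k,\frac jk]$ for $1\leq j\leq k$. Let $n\geq k$, let $\alpha_n$ be a conditional optimal set of $n$-points for $P$ with respect to $\beta$, and put $n_j=\mathrm{card}(\alpha_n\cap J_{k,j})$. Then for $2\leq j\leq k$, $|n_1-n_j|\in\{0,1\}$ and $n_1\leq n_j$.
   Context: For a Borel probability measure $P$ on $\mathbb{R}$ and finite $\beta$ with $\mathrm{card}(\beta)=r$, for $n\ge r$, $V_n=\inf\{\int\min_{a\in\alpha\cup\beta}(x-a)^2dP(x):\mathrm{card}(\alpha)\le n-r\}$; a set $\alpha\cup\beta$ attaining the infimum, with each point of $\beta$ having a Voronoi region of positive $P$-measure, is a conditional optimal set of $n$-points with respect to $\beta$ (it contains $\beta$). *)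

theory Defs
  imports "HOL-Probability.Probability"
begin

definition unifP :: "real measure" where
  "unifP = uniform_measure lborel {0..1}"

definition distortion :: "real measure \<Rightarrow> real set \<Rightarrow> real" where
  "distortion P S = (\<integral>x. Min ((\<lambda>a. (x - a)^2) ` S) \<partial>P)"

definition cond_error :: "real measure \<Rightarrow> real set \<Rightarrow> nat \<Rightarrow> real" where
  "cond_error P \<beta> n =
     Inf {distortion P (\<alpha> \<union> \<beta>) | \<alpha>. finite \<alpha> \<and> card \<alpha> \<le> n - card \<beta>}"

definition voronoi :: "real set \<Rightarrow> real \<Rightarrow> real set" where
  "voronoi S b = {x. \<forall>a\<in>S. dist x b \<le> dist x a}"

definition cond_optimal_set :: "real measure \<Rightarrow> real set \<Rightarrow> nat \<Rightarrow> real set \<Rightarrow> bool" where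
  "cond_optimal_set P \<beta> n S \<longleftrightarrow>
     finite \<beta> \<and> card \<beta> \<le> n \<and>
     (\<exists>\<alpha>. finite \<alpha> \<and> card \<alpha> \<le> n - card \<beta> \<and> S = \<alpha> \<union> \<beta>) \<and>
     distortion P S = cond_error P \<beta> n \<and>
     (\<forall>b\<in>\<beta>. measure P (voronoi S b) > 0)"

end

theory Submission
  imports Defs
begin

definition md :: "real set \<Rightarrow> real \<Rightarrow> real" where
  "md T x = Min ((\<lambda>a. (x - a)^2) ` T)"

lemma md_le: "finite T \<Longrightarrow> a \<in> T \<Longrightarrow> md T x \<le> (x - a)^2"
  unfolding md_def by (auto intro: Min_le)

lemma md_ge: "finite T \<Longrightarrow> T \<noteq> {} \<Longrightarrow> (\<And>a. a \<in> T \<Longrightarrow> c \<le> (x - a)^2) \<Longrightarrow> c \<le> md T x"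
  unfolding md_def by (auto intro: Min.boundedI)

lemma md_nonneg: "finite T \<Longrightarrow> T \<noteq> {} \<Longrightarrow> 0 \<le> md T x"
  by (rule md_ge) auto

lemma md_cont: "finite T \<Longrightarrow> T \<noteq> {} \<Longrightarrow> continuous_on UNIV (md T)"
proof (induction T rule: finite_ne_induct)
  case (singleton a)
  then show ?case unfolding md_def by (auto intro!: continuous_intros)
next
  case (insert a T)
  have "md (insert a T) = (\<lambda>x. min ((x-a)^2) (md T x))"
    using insert unfolding md_def by (auto simp: Min_insert)
  then show ?case using insert by (auto intro!: continuous_intros)
qed

lemma md_integrable: "finite T \<Longrightarrow> T \<noteq> {} \<Longrightarrow> md T integrable_on {a..b}"
  by (rule integrable_continuous_interval) (auto intro: continuous_on_subset[OF md_cont])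

lemma distortion_eq: assumes "finite T" "T \<noteq> {}"
  shows "distortion unifP T = integral {0..1} (md T)"
proof -
  have e: "emeasure lborel {0..1::real} = 1" by simp
  have u: "unifP = density lborel (\<lambda>x. ennreal (indicator {0..1::real} x))"
    unfolding unifP_def uniform_measure_def e by (simp add: divide_ennreal_def ennreal_indicator)
  have c: "continuous_on UNIV (md T)" using md_cont assms .
  have meas: "md T \<in> borel_measurable lborel"
    using borel_measurable_continuous_onI[OF c] by simp
  have "distortion unifP T = integral\<^sup>L unifP (md T)"
    unfolding distortion_def md_def by simp
  also have "\<dots> = integral\<^sup>L lborel (\<lambda>x. indicator {0..1::real} x *\<^sub>R md T x)"
    unfolding u by (rule integral_density) (auto simp: meas borel_measurable_continuous_onI[OF c])
  also have "\<dots> = (LINT x : {0..1} | lborel. md T x)"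
    by (simp add: set_lebesgue_integral_def)
  also have "\<dots> = integral {0..1} (md T)"
    apply (rule set_borel_integral_eq_integral)
    unfolding set_integrable_def
    by (rule borel_integrable_compact) (auto intro: continuous_on_subset[OF c])
  finally show ?thesis .
qed

lemma int_sq: fixes a b c :: real assumes "a \<le> b"
  shows "integral {a..b} (\<lambda>x. (x - c)^2) = ((b - c)^3 - (a - c)^3) / 3"
proof -
  have "((\<lambda>x. (x - c)^2) has_integral ((\<lambda>x. (x - c)^3 / 3) b - (\<lambda>x. (x - c)^3 / 3) a)) {a..b}"
    apply (rule fundamental_theorem_of_calculus[OF assms])
    apply (auto intro!: derivative_eq_intros simp: has_real_derivative_iff_has_vector_derivative[symmetric])
    done
  then show ?thesis by (simp add: integral_unique diff_divide_distrib)
qed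

lemma int_min2: fixes a b :: real assumes "a \<le> b"
  shows "integral {a..b} (\<lambda>x. min ((x - a)^2) ((x - b)^2)) = (b - a)^3 / 12"
proof -
  define c where "c = (a + b) / 2"
  have ac: "a \<le> c" "c \<le> b" using assms by (auto simp: c_def)
  have int: "(\<lambda>x. min ((x - a)^2) ((x - b)^2)) integrable_on {a..b}"
    by (rule integrable_continuous_interval) (auto intro!: continuous_intros)
  have 1: "integral {a..c} (\<lambda>x. min ((x - a)^2) ((x - b)^2)) = integral {a..c} (\<lambda>x. (x - a)^2)"
  proof (rule integral_cong)
    fix x assume "x \<in> {a..c}"
    then have "\<bar>x - a\<bar> \<le> \<bar>x - b\<bar>" using assms by (auto simp: c_def)
    then have "(x - a)^2 \<le> (x - b)^2" by (simp add: abs_le_square_iff)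
    then show "min ((x - a)^2) ((x - b)^2) = (x - a)^2" by simp
  qed
  have 2: "integral {c..b} (\<lambda>x. min ((x - a)^2) ((x - b)^2)) = integral {c..b} (\<lambda>x. (x - b)^2)"
  proof (rule integral_cong)
    fix x assume "x \<in> {c..b}"
    then have "\<bar>x - b\<bar> \<le> \<bar>x - a\<bar>" using assms by (auto simp: c_def)
    then have "(x - b)^2 \<le> (x - a)^2" by (simp add: abs_le_square_iff)
    then show "min ((x - a)^2) ((x - b)^2) = (x - b)^2" by simp
  qed
  have "integral {a..b} (\<lambda>x. min ((x - a)^2) ((x - b)^2)) =
     integral {a..c} (\<lambda>x. (x - a)^2) + integral {c..b} (\<lambda>x. (x - b)^2)"
    using Henstock_Kurzweil_Integration.integral_combine[OF ac int] 1 2 by simp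
  also have "\<dots> = (b - a)^3 / 12"
    using ac by (simp add: int_sq c_def field_simps power3_eq_cube)
  finally show ?thesis .
qed

lemma holder3:
  fixes A g \<mu> \<nu> :: real
  assumes "\<mu> > 0" "\<nu> > 0" "A \<ge> 0" "g \<ge> 0"
  shows "A^3 / \<mu>^2 + g^3 / \<nu>^2 \<ge> (A + g)^3 / (\<mu> + \<nu>)^2"
proof -
  define s where "s = (A + g) / (\<mu> + \<nu>)"
  have s0: "s \<ge> 0" using assms by (simp add: s_def)
  have t: "x^3 \<ge> 3 * y^2 * x - 2 * y^3" if "x \<ge> 0" "y \<ge> 0" for x y :: real
  proof -
    have "0 \<le> (x - y)^2 * (x + 2 * y)" using that by simp
    then show ?thesis by (simp add: algebra_simps power2_eq_square power3_eq_cube)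
  qed
  have 1: "A^3 / \<mu>^2 \<ge> 3 * s^2 * A - 2 * \<mu> * s^3"
  proof -
    have "A^3 \<ge> 3 * (\<mu> * s)^2 * A - 2 * (\<mu> * s)^3" using t[of A "\<mu> * s"] assms s0 by simp
    then show ?thesis using assms by (simp add: field_simps power2_eq_square power3_eq_cube)
  qed
  have 2: "g^3 / \<nu>^2 \<ge> 3 * s^2 * g - 2 * \<nu> * s^3"
  proof -
    have "g^3 \<ge> 3 * (\<nu> * s)^2 * g - 2 * (\<nu> * s)^3" using t[of g "\<nu> * s"] assms s0 by simp
    then show ?thesis using assms by (simp add: field_simps power2_eq_square power3_eq_cube)
  qed
  have D: "\<mu> + \<nu> > 0" using assms by simp
  have L: "A + g = (\<mu> + \<nu>) * s" using D by (simp add: s_def)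
  have "3 * s^2 * A - 2 * \<mu> * s^3 + (3 * s^2 * g - 2 * \<nu> * s^3) = 3 * s^2 * (A + g) - 2 * (\<mu> + \<nu>) * s^3"
    by (simp add: algebra_simps)
  also have "\<dots> = (\<mu> + \<nu>) * s^3" unfolding L by (simp add: power2_eq_square power3_eq_cube)
  also have "\<dots> = (A + g)^3 / (\<mu> + \<nu>)^2"
  proof -
    have gen: "d \<noteq> 0 \<Longrightarrow> d * y = (d * z)^3 / d^2 \<longleftrightarrow> y = z^3" for d y z :: real
      by (simp add: power2_eq_square power3_eq_cube field_simps)
    show ?thesis unfolding L using D gen by simp
  qed
  finally have "3 * s^2 * A - 2 * \<mu> * s^3 + (3 * s^2 * g - 2 * \<nu> * s^3) = (A + g)^3 / (\<mu> + \<nu>)^2" .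
  then show ?thesis using 1 2 by linarith
qed

lemma UBeq:
  fixes a g :: real
  assumes "finite T" "\<And>i. i \<le> m \<Longrightarrow> a + real i * g \<in> T" "g \<ge> 0"
  shows "integral {a..a + real m * g} (md T) \<le> real m * g^3 / 12"
  using assms(2)
proof (induction m)
  case 0
  then show ?case by simp
next
  case (Suc m)
  have ne: "T \<noteq> {}" using Suc.prems by blast
  let ?u = "a + real m * g" and ?v = "a + real (Suc m) * g"
  have uv: "?u \<in> T" "?v \<in> T" using Suc.prems[of m] Suc.prems[of "Suc m"] by auto
  have le: "a \<le> ?u" "?u \<le> ?v" using assms(3) by (auto simp: algebra_simps)
  have IH: "integral {a..?u} (md T) \<le> real m * g^3 / 12"
    using Suc.IH Suc.prems by auto
  have "integral {?u..?v} (md T) \<le> integral {?u..?v} (\<lambda>x. min ((x - ?u)^2) ((x - ?v)^2))"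
  proof (rule integral_le[OF md_integrable[OF assms(1) ne]])
    show "(\<lambda>x. min ((x - ?u)^2) ((x - ?v)^2)) integrable_on {?u..?v}"
      by (rule integrable_continuous_interval, auto intro!: continuous_intros)
    fix x show "md T x \<le> min ((x - ?u)^2) ((x - ?v)^2)"
      by (meson md_le[OF assms(1) uv(1)] md_le[OF assms(1) uv(2)] min.boundedI)
  qed
  also have "\<dots> = (?v - ?u)^3 / 12" by (rule int_min2[OF le(2)])
  also have "\<dots> = g^3 / 12" by (simp add: algebra_simps)
  finally have 2: "integral {?u..?v} (md T) \<le> g^3 / 12" .
  have "integral {a..?v} (md T) = integral {a..?u} (md T) + integral {?u..?v} (md T)"
    using Henstock_Kurzweil_Integration.integral_combine[OF le md_integrable[OF assms(1) ne]] by simp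
  then show ?case using IH 2 by (simp add: algebra_simps add_divide_distrib)
qed

lemma LB2:
  fixes p r :: real
  assumes "finite T" "T \<subseteq> {p..r}" "p \<in> T" "r \<in> T" "card T = Suc m" "1 \<le> m"
  shows "integral {p..r} (md T) \<ge> (r - p)^3 / (12 * (real m)^2)"
  using assms
proof (induction m arbitrary: T r)
  case 0
  then show ?case by simp
next
  case (Suc m)
  have fin: "finite T" and ne: "T \<noteq> {}" using Suc.prems by auto
  have pr: "p \<noteq> r"
  proof
    assume "p = r"
    then have "T \<subseteq> {p}" using Suc.prems by auto
    then have "card T \<le> 1" using card_mono[of "{p}" T] by simp
    then show False using Suc.prems by simp
  qed
  then have plr: "p < r" using Suc.prems by auto
  define T' where "T' = T - {r}"
  have fT': "finite T'" using fin by (simp add: T'_def)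
  have pT': "p \<in> T'" using Suc.prems pr by (simp add: T'_def)
  have neT': "T' \<noteq> {}" using pT' by auto
  have cT': "card T' = Suc m" using Suc.prems by (simp add: T'_def)
  define q where "q = Max T'"
  have qT': "q \<in> T'" using fT' neT' by (simp add: q_def)
  have aq: "a \<le> q" if "a \<in> T'" for a using fT' that by (simp add: q_def)
  have pq: "p \<le> q" using aq pT' by simp
  have qr: "q < r" using qT' Suc.prems by (auto simp: T'_def)
  have Tcases: "a = r \<or> a \<le> q" if "a \<in> T" for a using aq that by (auto simp: T'_def)
  have T'sub: "T' \<subseteq> {p..q}"
  proof
    fix a assume "a \<in> T'"
    then show "a \<in> {p..q}" using aq[of a] Suc.prems(2) by (auto simp: T'_def)
  qed
  have m0: "q = p" if "m = 0"
  proof -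
    have "card T' = 1" using cT' that by simp
    then obtain z where "T' = {z}" by (rule card_1_singletonE)
    then show "q = p" using qT' pT' by simp
  qed
  have I1: "integral {p..q} (md T) \<ge> (q - p)^3 / (12 * (real m)^2)"
  proof (cases "m = 0")
    case True
    then show ?thesis using m0 by simp
  next
    case False
    have IH: "integral {p..q} (md T') \<ge> (q - p)^3 / (12 * (real m)^2)"
      using Suc.IH[of T' q] fT' T'sub pT' qT' cT' False by simp
    have "integral {p..q} (md T') \<le> integral {p..q} (md T)"
    proof (rule integral_le[OF md_integrable[OF fT' neT'] md_integrable[OF fin ne]])
      fix x assume x: "x \<in> {p..q}"
      show "md T' x \<le> md T x"
      proof (rule md_ge[OF fin ne])
        fix a assume a: "a \<in> T"
        show "md T' x \<le> (x - a)^2"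
        proof (cases "a = r")
          case True
          have "md T' x \<le> (x - q)^2" by (rule md_le[OF fT' qT'])
          also have "\<dots> \<le> (x - a)^2" using x qr True
            by (simp add: abs_le_square_iff[symmetric])
          finally show ?thesis .
        next
          case False
          then show ?thesis using a md_le[OF fT'] by (simp add: T'_def)
        qed
      qed
    qed
    then show ?thesis using IH by linarith
  qed
  have I2: "integral {q..r} (md T) \<ge> (r - q)^3 / 12"
  proof -
    have "integral {q..r} (\<lambda>x. min ((x - q)^2) ((x - r)^2)) \<le> integral {q..r} (md T)"
    proof (rule integral_le[OF _ md_integrable[OF fin ne]])
      show "(\<lambda>x. min ((x - q)^2) ((x - r)^2)) integrable_on {q..r}"
        by (rule integrable_continuous_interval, auto intro!: continuous_intros)
      fix x assume x: "x \<in> {q..r}"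
      show "min ((x - q)^2) ((x - r)^2) \<le> md T x"
      proof (rule md_ge[OF fin ne])
        fix a assume a: "a \<in> T"
        show "min ((x - q)^2) ((x - r)^2) \<le> (x - a)^2"
        proof (cases "a = r")
          case True then show ?thesis by simp
        next
          case False
          then have "a \<le> q" using Tcases a by blast
          then have "(x - q)^2 \<le> (x - a)^2" using x
            by (simp add: abs_le_square_iff[symmetric])
          then show ?thesis by simp
        qed
      qed
    qed
    then show ?thesis using int_min2[of q r] qr by simp
  qed
  have comb: "integral {p..r} (md T) = integral {p..q} (md T) + integral {q..r} (md T)"
    using Henstock_Kurzweil_Integration.integral_combine[OF pq less_imp_le[OF qr] md_integrable[OF fin ne]] by simp
  have H: "(q - p)^3 / (12 * (real m)^2) + (r - q)^3 / 12 \<ge> (r - p)^3 / (12 * (real (Suc m))^2)"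
  proof (cases "m = 0")
    case True
    then show ?thesis using m0 by simp
  next
    case False
    have "(q - p)^3 / (real m)^2 + (r - q)^3 / 1^2 \<ge> ((q - p) + (r - q))^3 / (real m + 1)^2"
      by (rule holder3) (use False pq qr in auto)
    then have "(q - p)^3 / (real m)^2 + (r - q)^3 \<ge> (r - p)^3 / (real (Suc m))^2"
      by (simp add: add.commute)
    then show ?thesis by (simp add: divide_simps)
  qed
  show ?case using comb I1 I2 H by linarith
qed

lemma LB1:
  fixes r :: real
  assumes fin: "finite S" and r: "r > 0" "r \<in> S" and nn: "\<forall>a\<in>S. a \<ge> 0"
    and c: "card (S \<inter> {0..r}) = Suc m"
  shows "integral {0..r} (md S) \<ge> r^3 / (3 * (2 * real m + 1)^2)"
proof -
  define T where "T = S \<inter> {0..r}"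
  have fT: "finite T" using fin by (simp add: T_def)
  have rT: "r \<in> T" using r by (simp add: T_def)
  have neT: "T \<noteq> {}" and neS: "S \<noteq> {}" using rT r by auto
  define p where "p = Min T"
  have pT: "p \<in> T" using fT neT by (simp add: p_def)
  have pa: "p \<le> a" if "a \<in> T" for a using fT that by (simp add: p_def)
  have p0: "0 \<le> p" "p \<le> r" using pT by (auto simp: T_def)
  have Tsub: "T \<subseteq> {p..r}" using pa by (auto simp: T_def)
  have pS: "p \<le> a" if "a \<in> S" for a
    using pa[of a] that nn p0 by (cases "a \<le> r") (auto simp: T_def)
  have I1: "integral {0..p} (md S) \<ge> p^3 / 3"
  proof -
    have "integral {0..p} (\<lambda>x. (x - p)^2) \<le> integral {0..p} (md S)"
    proof (rule integral_le[OF _ md_integrable[OF fin neS]])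
      show "(\<lambda>x. (x - p)^2) integrable_on {0..p}"
        by (rule integrable_continuous_interval, auto intro!: continuous_intros)
      fix x assume x: "x \<in> {0..p}"
      show "(x - p)^2 \<le> md S x"
      proof (rule md_ge[OF fin neS])
        fix a assume "a \<in> S"
        then have "p \<le> a" by (rule pS)
        then show "(x - p)^2 \<le> (x - a)^2" using x by (simp add: abs_le_square_iff[symmetric])
      qed
    qed
    then show ?thesis using int_sq[OF p0(1), of p] by simp
  qed
  have I2: "integral {p..r} (md S) \<ge> (r - p)^3 / (12 * (real m)^2)"
  proof (cases "m = 0")
    case True
    have "card T = 1" using c True by (simp add: T_def)
    then obtain z where "T = {z}" by (rule card_1_singletonE)
    then have "p = r" using pT rT by simp
    then show ?thesis by simp
  next
    case False
    have "integral {p..r} (md T) \<ge> (r - p)^3 / (12 * (real m)^2)"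
      by (rule LB2[OF fT Tsub pT rT]) (use c False in \<open>auto simp: T_def\<close>)
    moreover have "integral {p..r} (md T) \<le> integral {p..r} (md S)"
    proof (rule integral_le[OF md_integrable[OF fT neT] md_integrable[OF fin neS]])
      fix x assume x: "x \<in> {p..r}"
      show "md T x \<le> md S x"
      proof (rule md_ge[OF fin neS])
        fix a assume a: "a \<in> S"
        show "md T x \<le> (x - a)^2"
        proof (cases "a \<in> T")
          case True then show ?thesis by (rule md_le[OF fT])
        next
          case False
          then have "a > r" using a nn by (auto simp: T_def)
          have "md T x \<le> (x - r)^2" by (rule md_le[OF fT rT])
          also have "\<dots> \<le> (x - a)^2" using x \<open>a > r\<close> by (simp add: abs_le_square_iff[symmetric])
          finally show ?thesis .
        qed
      qed
    qed
    ultimately show ?thesis by linarith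
  qed
  have comb: "integral {0..r} (md S) = integral {0..p} (md S) + integral {p..r} (md S)"
    using Henstock_Kurzweil_Integration.integral_combine[OF p0 md_integrable[OF fin neS]] by simp
  have H: "p^3 / 3 + (r - p)^3 / (12 * (real m)^2) \<ge> r^3 / (3 * (2 * real m + 1)^2)"
  proof (cases "m = 0")
    case True
    have "card T = 1" using c True by (simp add: T_def)
    then obtain z where "T = {z}" by (rule card_1_singletonE)
    then have "p = r" using pT rT by simp
    then show ?thesis using True by simp
  next
    case False
    have "p^3 / (1/2)^2 + (r - p)^3 / (real m)^2 \<ge> (p + (r - p))^3 / (1/2 + real m)^2"
      by (rule holder3) (use False p0 in auto)
    then have "4 * p^3 + (r - p)^3 / (real m)^2 \<ge> r^3 / (1/2 + real m)^2"
      by (simp add: power2_eq_square)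
    moreover have "r^3 / (1/2 + real m)^2 = 4 * (r^3 / (2 * real m + 1)^2)"
      by (simp add: power2_eq_square field_simps)
    ultimately have X: "4 * p^3 + (r - p)^3 / (real m)^2 \<ge> 4 * (r^3 / (2 * real m + 1)^2)" by simp
    have e1: "p^3 / 3 + (r - p)^3 / (12 * (real m)^2) = (4 * p^3 + (r - p)^3 / (real m)^2) / 12"
      using False by (simp add: field_simps)
    have e2: "r^3 / (3 * (2 * real m + 1)^2) = 4 * (r^3 / (2 * real m + 1)^2) / 12"
      by simp
    show ?thesis unfolding e1 e2 using X by (simp add: divide_right_mono)
  qed
  show ?thesis using comb I1 I2 H by linarith
qed

lemma LB1b:
  fixes r :: real
  assumes fin: "finite S" and r: "r > 0" "r \<in> S"
    and c: "card (S \<inter> {0..r}) = c"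
  shows "integral {0..r} (md S) \<ge> r^3 / (12 * (real c)^2)"
proof -
  define T where "T = insert 0 (S \<inter> {0..r})"
  have fT: "finite T" using fin by (simp add: T_def)
  have rT: "r \<in> T" and zT: "0 \<in> T" using r by (auto simp: T_def)
  have neT: "T \<noteq> {}" and neS: "S \<noteq> {}" using rT r by auto
  have Tsub: "T \<subseteq> {0..r}" using r by (auto simp: T_def)
  have cT: "card T \<le> Suc c" using c fin by (simp add: T_def card_insert_if)
  have c1: "c \<ge> 1" using c r fin by (metis One_nat_def Suc_leI card_gt_0_iff empty_iff finite_Int IntI atLeastAtMost_iff less_le order_refl)
  have cT2: "card T \<ge> 2"
  proof -
    have "{0, r} \<subseteq> T" using rT zT by auto
    then have "card {0, r} \<le> card T" by (rule card_mono[OF fT])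
    then show ?thesis using r by simp
  qed
  define m where "m = card T - 1"
  have m: "card T = Suc m" "1 \<le> m" "m \<le> c" using cT cT2 by (auto simp: m_def)
  have "integral {0..r} (md T) \<ge> (r - 0)^3 / (12 * (real m)^2)"
    by (rule LB2[OF fT Tsub zT rT m(1,2)])
  moreover have "(r - 0)^3 / (12 * (real m)^2) \<ge> r^3 / (12 * (real c)^2)"
    using m r by (auto intro!: divide_left_mono mult_pos_pos)
  moreover have "integral {0..r} (md T) \<le> integral {0..r} (md S)"
  proof (rule integral_le[OF md_integrable[OF fT neT] md_integrable[OF fin neS]])
    fix x assume x: "x \<in> {0..r}"
    show "md T x \<le> md S x"
    proof (rule md_ge[OF fin neS])
      fix a assume a: "a \<in> S"
      show "md T x \<le> (x - a)^2"
      proof (cases "a \<in> T")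
        case True then show ?thesis by (rule md_le[OF fT])
      next
        case False
        then have "a < 0 \<or> a > r" using a by (auto simp: T_def)
        then show ?thesis
        proof
          assume "a < 0"
          have "md T x \<le> (x - 0)^2" by (rule md_le[OF fT zT])
          also have "\<dots> \<le> (x - a)^2" using x \<open>a < 0\<close> by (simp add: abs_le_square_iff[symmetric])
          finally show ?thesis .
        next
          assume "a > r"
          have "md T x \<le> (x - r)^2" by (rule md_le[OF fT rT])
          also have "\<dots> \<le> (x - a)^2" using x \<open>a > r\<close> by (simp add: abs_le_square_iff[symmetric])
          finally show ?thesis .
        qed
      qed
    qed
  qed
  ultimately show ?thesis by linarith
qed

lemma UB1:
  fixes r :: real
  assumes fin: "finite T" and r: "r > 0"
    and P: "\<And>i. i \<le> m \<Longrightarrow> r / (2 * real m + 1) + real i * (2 * (r / (2 * real m + 1))) \<in> T"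
  shows "integral {0..r} (md T) \<le> r^3 / (3 * (2 * real m + 1)^2)"
proof -
  define h where "h = r / (2 * real m + 1)"
  have h0: "h > 0" using r by (simp add: h_def)
  have pos: "2 * real m + 1 > 0" by simp
  have "h * (2 * real m + 1) = r" using pos by (simp add: h_def)
  moreover have "h + real m * (2 * h) = h * (2 * real m + 1)" by (simp add: algebra_simps)
  ultimately have hr: "h + real m * (2 * h) = r" by simp
  have hT: "h \<in> T" using P[of 0] by (simp add: h_def)
  have ne: "T \<noteq> {}" using hT by auto
  have I2: "integral {h..h + real m * (2 * h)} (md T) \<le> real m * (2 * h)^3 / 12"
    by (rule UBeq[OF fin]) (use P h0 in \<open>auto simp: h_def\<close>)
  have I1: "integral {0..h} (md T) \<le> h^3 / 3"
  proof -
    have "integral {0..h} (md T) \<le> integral {0..h} (\<lambda>x. (x - h)^2)"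
    proof (rule integral_le[OF md_integrable[OF fin ne]])
      show "(\<lambda>x. (x - h)^2) integrable_on {0..h}"
        by (rule integrable_continuous_interval, auto intro!: continuous_intros)
      fix x show "md T x \<le> (x - h)^2" by (rule md_le[OF fin hT])
    qed
    then show ?thesis using int_sq[of 0 h h] h0 by simp
  qed
  have hle: "h \<le> r" using hr h0 by (metis le_add_same_cancel1 of_nat_0_le_iff mult_nonneg_nonneg less_imp_le zero_le_mult_iff mult_2 add_nonneg_nonneg)
  have comb: "integral {0..r} (md T) = integral {0..h} (md T) + integral {h..r} (md T)"
    using Henstock_Kurzweil_Integration.integral_combine[of 0 h r, OF _ hle md_integrable[OF fin ne]] h0
    by simp
  have e1: "h^3 / 3 + real m * (2 * h)^3 / 12 = h^3 * (2 * real m + 1) / 3"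
    by (simp add: power3_eq_cube algebra_simps)
  have e2: "(r / D)^3 * D / 3 = r^3 / (3 * D^2)" if "D > 0" for D :: real
    using that by (simp add: power2_eq_square power3_eq_cube field_simps)
  have "h^3 / 3 + real m * (2 * h)^3 / 12 = r^3 / (3 * (2 * real m + 1)^2)"
    unfolding e1 using e2[OF pos] by (simp add: h_def)
  then show ?thesis using comb I1 I2 hr by simp
qed

lemma UB2:
  fixes l L :: real
  assumes fin: "finite T" and L: "L \<ge> 0" and m: "m \<ge> 1"
    and P: "\<And>i. i \<le> m \<Longrightarrow> l + real i * (L / real m) \<in> T"
  shows "integral {l..l + L} (md T) \<le> L^3 / (12 * (real m)^2)"
proof -
  have "integral {l..l + real m * (L / real m)} (md T) \<le> real m * (L / real m)^3 / 12"
    by (rule UBeq[OF fin P]) (use L in auto)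
  moreover have "l + real m * (L / real m) = l + L" using m by simp
  moreover have "real m * (L / real m)^3 / 12 = L^3 / (12 * (real m)^2)"
    using m by (simp add: power2_eq_square power3_eq_cube field_simps)
  ultimately show ?thesis by simp
qed

lemma LBj:
  fixes l u :: real
  assumes fin: "finite S" and lu: "l < u" "l \<in> S" "u \<in> S"
    and c: "card (S \<inter> {l..u}) = Suc m" and m: "1 \<le> m"
  shows "integral {l..u} (md S) \<ge> (u - l)^3 / (12 * (real m)^2)"
proof -
  define T where "T = S \<inter> {l..u}"
  have fT: "finite T" using fin by (simp add: T_def)
  have lT: "l \<in> T" and uT: "u \<in> T" using lu by (auto simp: T_def)
  have neT: "T \<noteq> {}" and neS: "S \<noteq> {}" using lT lu by auto
  have "integral {l..u} (md T) \<ge> (u - l)^3 / (12 * (real m)^2)"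
    by (rule LB2[OF fT _ lT uT]) (use c m in \<open>auto simp: T_def\<close>)
  moreover have "integral {l..u} (md T) \<le> integral {l..u} (md S)"
  proof (rule integral_le[OF md_integrable[OF fT neT] md_integrable[OF fin neS]])
    fix x assume x: "x \<in> {l..u}"
    show "md T x \<le> md S x"
    proof (rule md_ge[OF fin neS])
      fix a assume a: "a \<in> S"
      show "md T x \<le> (x - a)^2"
      proof (cases "a \<in> T")
        case True then show ?thesis by (rule md_le[OF fT])
      next
        case False
        then have "a < l \<or> a > u" using a by (auto simp: T_def)
        then show ?thesis
        proof
          assume "a < l"
          have "md T x \<le> (x - l)^2" by (rule md_le[OF fT lT])
          also have "\<dots> \<le> (x - a)^2" using x \<open>a < l\<close> by (simp add: abs_le_square_iff[symmetric])
          finally show ?thesis .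
        next
          assume "a > u"
          have "md T x \<le> (x - u)^2" by (rule md_le[OF fT uT])
          also have "\<dots> \<le> (x - a)^2" using x \<open>a > u\<close> by (simp add: abs_le_square_iff[symmetric])
          finally show ?thesis .
        qed
      qed
    qed
  qed
  ultimately show ?thesis by linarith
qed

lemma phi_mono:
  fixes s t :: real
  assumes "1 < s" "s < t"
  shows "1 / s^2 + 1 / (t - 1)^2 < 1 / (s - 1)^2 + 1 / t^2"
proof -
  have A: "1 / (x - 1) - 1 / x = 1 / (x * (x - 1))" if "x > 1" for x :: real
    using that by (simp add: field_simps)
  have D: "1 / (x - 1)^2 - 1 / x^2 = (1 / (x - 1) - 1 / x) * (1 / (x - 1) + 1 / x)" for x :: real
    by (simp add: power2_eq_square algebra_simps)
  have st: "s * (s - 1) < t * (t - 1)" using assms by (intro mult_strict_mono) auto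
  have a1: "1 / (t * (t - 1)) < 1 / (s * (s - 1))"
    using st assms by (intro divide_strict_left_mono) auto
  have b1: "1 / (t - 1) < 1 / (s - 1)" "1 / t < 1 / s"
    using assms by (auto intro!: divide_strict_left_mono)
  have pos: "0 \<le> 1 / (t * (t - 1))" "0 \<le> 1 / (t - 1) + 1 / t" using assms by auto
  have "(1 / (t * (t - 1))) * (1 / (t - 1) + 1 / t) < (1 / (s * (s - 1))) * (1 / (s - 1) + 1 / s)"
    apply (rule mult_strict_mono') using a1 b1 pos by auto
  then have "1 / (t - 1)^2 - 1 / t^2 < 1 / (s - 1)^2 - 1 / s^2"
    unfolding D A[OF \<open>1 < s\<close>] using A[of t] assms by simp
  then show ?thesis by linarith
qed

theorem lemma4p3:
  fixes k n j :: nat and S :: "real set"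
  assumes "n \<ge> k"
    and "cond_optimal_set unifP {real i / real k | i. i \<in> {1..k}} n S"
    and "2 \<le> j" and "j \<le> k"
  shows "\<bar>int (card (S \<inter> {0 .. 1 / real k})) - int (card (S \<inter> {real (j - 1) / real k .. real j / real k}))\<bar> \<in> {0, 1}
         \<and> card (S \<inter> {0 .. 1 / real k}) \<le> card (S \<inter> {real (j - 1) / real k .. real j / real k})"
proof -
  define B where "B = {real i / real k | i. i \<in> {1..k}}"
  have opt: "cond_optimal_set unifP B n S" using assms(2) by (simp add: B_def)
  from opt obtain \<alpha> where fB: "finite B" and fa: "finite \<alpha>" and ca: "card \<alpha> \<le> n - card B"
      and Seq: "S = \<alpha> \<union> B" and dS: "distortion unifP S = cond_error unifP B n"
    unfolding cond_optimal_set_def by blast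
  have k2: "k \<ge> 2" using assms(3,4) by simp
  have kpos: "real k > 0" using k2 by simp
  have Bimg: "B = (\<lambda>i. real i / real k) ` {1..k}" by (auto simp: B_def)
  have cardB: "card B = k"
  proof -
    have "inj_on (\<lambda>i. real i / real k) {1..k}" using kpos by (auto simp: inj_on_def)
    then show ?thesis unfolding Bimg by (simp add: card_image)
  qed
  have finS: "finite S" using fa fB Seq by simp
  have BS: "B \<subseteq> S" using Seq by simp
  have cardS: "card S \<le> n"
  proof -
    have "card S \<le> card \<alpha> + card B" unfolding Seq by (rule card_Un_le)
    then show ?thesis using ca cardB assms(1) by simp
  qed
  define r where "r = 1 / real k"
  define l where "l = real (j - 1) / real k"
  define u where "u = real j / real k"
  have Bmem: "real i / real k \<in> B" if "1 \<le> i" "i \<le> k" for i using that by (auto simp: B_def)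
  have rB: "r \<in> B" using Bmem[of 1] k2 by (simp add: r_def)
  have lB: "l \<in> B" using Bmem[of "j - 1"] assms(3,4) by (simp add: l_def)
  have uB: "u \<in> B" using Bmem[of j] assms(3,4) by (simp add: u_def)
  have neS: "S \<noteq> {}" using rB BS by auto
  have r0: "r > 0" using kpos by (simp add: r_def)
  have rl: "r \<le> l" using assms(3) kpos by (simp add: r_def l_def divide_right_mono)
  have ulr: "u = l + r"
  proof -
    have "real (j - 1) = real j - 1" using assms(3) by simp
    then show ?thesis by (simp add: u_def l_def r_def add_divide_distrib[symmetric])
  qed
  have lu: "l < u" using ulr r0 by simp
  have u1: "u \<le> 1" using assms(4) kpos by (simp add: u_def)
  have Bcases: "b = r \<or> b = l \<or> b = u \<or> (b \<notin> {x. x \<le> r} \<and> b \<notin> {l..u})" if "b \<in> B" for b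
  proof -
    obtain i where i: "1 \<le> i" "i \<le> k" "b = real i / real k" using \<open>b \<in> B\<close> by (auto simp: B_def)
    have br: "r \<le> b" using i kpos by (simp add: r_def divide_right_mono)
    show ?thesis
    proof (cases "b \<le> r")
      case True
      then show ?thesis using br by simp
    next
      case False
      show ?thesis
      proof (cases "b \<in> {l..u}")
        case True
        then have "real (j - 1) \<le> real i" "real i \<le> real j"
          using i kpos by (auto simp: l_def u_def divide_le_cancel)
        then have "i = j - 1 \<or> i = j" by linarith
        then show ?thesis using i by (auto simp: l_def u_def)
      next
        case False
        then show ?thesis using \<open>\<not> b \<le> r\<close> by simp
      qed
    qed
  qed
  define c1 where "c1 = card (S \<inter> {0..r})"
  define cj where "cj = card (S \<inter> {l..u})"
  define N where "N = S \<inter> {x. x < 0}"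
  define I1 where "I1 = integral {0..r} (md S)"
  define Ij where "Ij = integral {l..u} (md S)"
  have dist_nonneg: "distortion unifP T \<ge> 0" if "finite T" "T \<noteq> {}" for T
    using distortion_eq[OF that] integral_nonneg[OF md_integrable[OF that] md_nonneg[OF that]] by simp
  have split4: "integral {0..1} (md T) = integral {0..r} (md T) + integral {r..l} (md T)
       + integral {l..u} (md T) + integral {u..1} (md T)" if "finite T" "T \<noteq> {}" for T
  proof -
    have i: "md T integrable_on {a..b}" for a b using md_integrable[OF that] .
    have "integral {0..1} (md T) = integral {0..r} (md T) + integral {r..1} (md T)"
      using Henstock_Kurzweil_Integration.integral_combine[OF _ _ i, of 0 r 1] r0 rl lu u1 by simp
    moreover have "integral {r..1} (md T) = integral {r..l} (md T) + integral {l..1} (md T)"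
      using Henstock_Kurzweil_Integration.integral_combine[OF _ _ i, of r l 1] r0 rl lu u1 by simp
    moreover have "integral {l..1} (md T) = integral {l..u} (md T) + integral {u..1} (md T)"
      using Henstock_Kurzweil_Integration.integral_combine[OF _ _ i, of l u 1] r0 rl lu u1 by simp
    ultimately show ?thesis by simp
  qed
  have swap: "I1 + Ij \<le> r^3 / (3 * (2 * real m1 + 1)^2) + r^3 / (12 * (real g)^2)"
    if g1: "1 \<le> g" and cnt: "m1 + 1 + (g + 1) \<le> c1 + cj + card N" for m1 g
  proof -
    define h where "h = r / (2 * real m1 + 1)"
    define P1 where "P1 = (\<lambda>i. h + real i * (2 * h)) ` {..m1}"
    define Pj where "Pj = (\<lambda>i. l + real i * (r / real g)) ` {..g}"
    define A where "A = {x. x \<le> r} \<union> {l..u}"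
    define S' where "S' = (S - A) \<union> (P1 \<union> Pj)"
    have pos: "2 * real m1 + 1 > 0" by simp
    have h0: "h > 0" using r0 by (simp add: h_def)
    have "h * (2 * real m1 + 1) = r" using pos by (simp add: h_def)
    moreover have "h + real m1 * (2 * h) = h * (2 * real m1 + 1)" by (simp add: algebra_simps)
    ultimately have hr: "h + real m1 * (2 * h) = r" by simp
    have P1sub: "P1 \<subseteq> {0..r}"
    proof
      fix x assume "x \<in> P1"
      then obtain i where i: "i \<le> m1" "x = h + real i * (2 * h)" by (auto simp: P1_def)
      have "real i * (2 * h) \<le> real m1 * (2 * h)" using i h0 by (simp add: mult_right_mono)
      then have a: "h + real i * (2 * h) \<le> r" using hr by linarith
      have b: "0 \<le> h + real i * (2 * h)" using h0 by simp
      show "x \<in> {0..r}" using i a b by simp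
    qed
    have rP1: "r \<in> P1" using hr by (auto simp: P1_def image_iff intro!: bexI[of _ m1])
    have gpos: "real g > 0" using g1 by simp
    have Pjsub: "Pj \<subseteq> {l..u}"
    proof
      fix x assume "x \<in> Pj"
      then obtain i where i: "i \<le> g" "x = l + real i * (r / real g)" by (auto simp: Pj_def)
      have "real i * (r / real g) \<le> real g * (r / real g)"
        by (rule mult_right_mono) (use i r0 gpos in auto)
      moreover have "real g * (r / real g) = r" using gpos by simp
      ultimately have a: "l + real i * (r / real g) \<le> u" using ulr by linarith
      have b: "l \<le> l + real i * (r / real g)" using r0 gpos by simp
      show "x \<in> {l..u}" using i a b by simp
    qed
    have lPj: "l \<in> Pj" by (auto simp: Pj_def image_iff intro!: bexI[of _ 0])
    have uPj: "u \<in> Pj" using gpos ulr by (auto simp: Pj_def image_iff intro!: bexI[of _ g])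
    have fP1: "finite P1" and fPj: "finite Pj" by (auto simp: P1_def Pj_def)
    have finS': "finite S'" using finS fP1 fPj by (simp add: S'_def)
    have neS': "S' \<noteq> {}" using rP1 by (auto simp: S'_def)
    have rS': "r \<in> S'" and lS': "l \<in> S'" and uS': "u \<in> S'" using rP1 lPj uPj by (auto simp: S'_def)
    have BS': "B \<subseteq> S'"
    proof
      fix b assume b: "b \<in> B"
      show "b \<in> S'" using Bcases[OF b] rS' lS' uS' b BS by (auto simp: S'_def A_def)
    qed
    have cardS': "card S' \<le> n"
    proof -
      define X where "X = {0..r} \<inter> {l..u}"
      have X: "X = P1 \<inter> Pj"
      proof
        show "P1 \<inter> Pj \<subseteq> X" using P1sub Pjsub unfolding X_def by blast
        show "X \<subseteq> P1 \<inter> Pj"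
        proof
          fix x assume "x \<in> X"
          then have "x = r" "l = r" using rl by (auto simp: X_def)
          then show "x \<in> P1 \<inter> Pj" using rP1 lPj by simp
        qed
      qed
      have XS: "(S \<inter> {0..r}) \<inter> (S \<inter> {l..u}) = X"
      proof -
        have "X \<subseteq> {r}" using rl by (auto simp: X_def)
        then have "X \<subseteq> S" using rB BS by blast
        then show ?thesis by (auto simp: X_def)
      qed
      have c1: "card (P1 \<union> Pj) + card X = card P1 + card Pj"
        using card_Un_Int[OF fP1 fPj] X by simp
      have cP1: "card P1 \<le> m1 + 1" unfolding P1_def using card_image_le[of "{..m1}"] by simp
      have cPj: "card Pj \<le> g + 1" unfolding Pj_def using card_image_le[of "{..g}"] by simp
      have c2: "card ((S \<inter> {0..r}) \<union> (S \<inter> {l..u})) + card X = c1 + cj"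
        using card_Un_Int[of "S \<inter> {0..r}" "S \<inter> {l..u}"] finS XS by (simp add: c1_def cj_def)
      have SA: "S \<inter> A = N \<union> ((S \<inter> {0..r}) \<union> (S \<inter> {l..u}))"
        using r0 rl by (auto simp: A_def N_def)
      have c3: "card (S \<inter> A) = card N + card ((S \<inter> {0..r}) \<union> (S \<inter> {l..u}))"
        unfolding SA by (rule card_Un_disjoint) (use finS r0 rl in \<open>auto simp: N_def\<close>)
      have c4: "card S = card (S \<inter> A) + card (S - A)" by (rule card_Int_Diff[OF finS])
      have c5: "card S' \<le> card (S - A) + card (P1 \<union> Pj)" unfolding S'_def by (rule card_Un_le)
      show ?thesis using c1 c2 c3 c4 c5 cP1 cPj cnt cardS by linarith
    qed
    have feas: "cond_error unifP B n \<le> distortion unifP S'"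
      unfolding cond_error_def
    proof (rule cInf_lower)
      have e: "distortion unifP S' = distortion unifP ((S' - B) \<union> B)" using BS'
        by (simp add: Un_absorb2)
      have "finite (S' - B)" using finS' by simp
      moreover have "card (S' - B) \<le> n - card B"
        using card_Diff_subset[OF fB BS'] cardS' by simp
      ultimately show "distortion unifP S' \<in> {distortion unifP (\<alpha> \<union> B) |\<alpha>. finite \<alpha> \<and> card \<alpha> \<le> n - card B}"
        unfolding e by blast
      show "bdd_below {distortion unifP (\<alpha> \<union> B) |\<alpha>. finite \<alpha> \<and> card \<alpha> \<le> n - card B}"
        by (rule bdd_belowI[of _ 0]) (use dist_nonneg fB rB in auto)
    qed
    have le01: "integral {0..1} (md S) \<le> integral {0..1} (md S')"
      using feas dS distortion_eq[OF finS neS] distortion_eq[OF finS' neS'] by simp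
    have U1: "integral {0..r} (md S') \<le> r^3 / (3 * (2 * real m1 + 1)^2)"
      by (rule UB1[OF finS' r0]) (auto simp: S'_def P1_def h_def)
    have U2: "integral {l..u} (md S') \<le> r^3 / (12 * (real g)^2)"
      unfolding ulr by (rule UB2[OF finS' _ g1]) (use r0 in \<open>auto simp: S'_def Pj_def\<close>)
    have pw: "md S' x \<le> md S x" if x: "x \<in> {r..l} \<or> x \<in> {u..1}" for x
    proof (rule md_ge[OF finS neS])
      fix a assume a: "a \<in> S"
      show "md S' x \<le> (x - a)^2"
      proof (cases "a \<in> A")
        case False
        then have "a \<in> S'" using a by (simp add: S'_def)
        then show ?thesis by (rule md_le[OF finS'])
      next
        case True
        then have aA: "a \<le> r \<or> (l \<le> a \<and> a \<le> u)" by (auto simp: A_def)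
        show ?thesis
        proof (cases "x \<in> {r..l}")
          case True
          show ?thesis using aA
          proof
            assume "a \<le> r"
            have "md S' x \<le> (x - r)^2" by (rule md_le[OF finS' rS'])
            also have "\<dots> \<le> (x - a)^2" using True \<open>a \<le> r\<close> by (simp add: abs_le_square_iff[symmetric])
            finally show ?thesis .
          next
            assume "l \<le> a \<and> a \<le> u"
            have "md S' x \<le> (x - l)^2" by (rule md_le[OF finS' lS'])
            also have "\<dots> \<le> (x - a)^2" using True \<open>l \<le> a \<and> a \<le> u\<close> by (simp add: abs_le_square_iff[symmetric])
            finally show ?thesis .
          qed
        next
          case False
          then have xu: "u \<le> x" using x by auto
          have au: "a \<le> u" using aA rl lu by auto
          have "md S' x \<le> (x - u)^2" by (rule md_le[OF finS' uS'])
          also have "\<dots> \<le> (x - a)^2" using xu au by (simp add: abs_le_square_iff[symmetric])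
          finally show ?thesis .
        qed
      qed
    qed
    have M1: "integral {r..l} (md S') \<le> integral {r..l} (md S)"
      by (rule integral_le[OF md_integrable[OF finS' neS'] md_integrable[OF finS neS]]) (use pw in auto)
    have M2: "integral {u..1} (md S') \<le> integral {u..1} (md S)"
      by (rule integral_le[OF md_integrable[OF finS' neS'] md_integrable[OF finS neS]]) (use pw in auto)
    show ?thesis using le01 split4[OF finS neS] split4[OF finS' neS'] U1 U2 M1 M2
      unfolding I1_def Ij_def by linarith
  qed
  have c1pos: "c1 \<ge> 1"
  proof -
    have "r \<in> S \<inter> {0..r}" using rB BS r0 by auto
    then show ?thesis unfolding c1_def using finS
      by (metis One_nat_def Suc_leI card_gt_0_iff empty_iff finite_Int)
  qed
  have cj2: "cj \<ge> 2"
  proof -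
    have "{l, u} \<subseteq> S \<inter> {l..u}" using lB uB BS lu by auto
    then have "card {l, u} \<le> cj" unfolding cj_def by (rule card_mono[rotated]) (use finS in simp)
    then show ?thesis using lu by simp
  qed
  have r3: "r^3 > 0" using r0 by simp
  have LBj': "Ij \<ge> r^3 / (12 * (real (cj - 1))^2)"
    using LBj[OF finS lu BS[THEN subsetD, OF lB] BS[THEN subsetD, OF uB], of "cj - 1"] cj2 ulr
    by (simp add: Ij_def cj_def)
  have conv1: "r^3 / (3 * (2 * y + 1)^2) = (r^3 / 12) * (1 / (y + 1/2)^2)" for y :: real
    by (simp add: power2_eq_square field_simps)
  have conv2: "r^3 / (12 * z^2) = (r^3 / 12) * (1 / z^2)" for z :: real
    by simp
  have main: "c1 \<le> cj \<and> cj \<le> c1 + 1"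
  proof (cases "N = {}")
    case False
    have cN: "card N \<ge> 1" using False finS by (simp add: N_def Suc_le_eq card_gt_0_iff)
    have sw: "I1 + Ij \<le> r^3 / (3 * (2 * real c1 + 1)^2) + r^3 / (12 * (real (cj - 1))^2)"
      by (rule swap) (use cj2 cN in auto)
    have L1: "I1 \<ge> r^3 / (12 * (real c1)^2)"
      using LB1b[OF finS r0 BS[THEN subsetD, OF rB]] by (simp add: I1_def c1_def)
    have "r^3 / (12 * (real c1)^2) \<le> r^3 / (3 * (2 * real c1 + 1)^2)" using sw L1 LBj' by linarith
    moreover have "r^3 / (3 * (2 * real c1 + 1)^2) < r^3 / (12 * (real c1)^2)"
    proof (rule divide_strict_left_mono[OF _ r3])
      show "12 * (real c1)^2 < 3 * (2 * real c1 + 1)^2" by (simp add: power2_eq_square algebra_simps)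
      show "0 < 3 * (2 * real c1 + 1)^2 * (12 * (real c1)^2)" using c1pos by simp
    qed
    ultimately show ?thesis by linarith
  next
    case True
    then have nn: "\<forall>a\<in>S. a \<ge> 0" by (auto simp: N_def not_less)
    have L1: "I1 \<ge> r^3 / (3 * (2 * real (c1 - 1) + 1)^2)"
      using LB1[OF finS r0 BS[THEN subsetD, OF rB] nn, of "c1 - 1"] c1pos by (simp add: I1_def c1_def)
    have A: "c1 \<le> cj"
    proof (rule ccontr)
      assume "\<not> c1 \<le> cj"
      then have c: "c1 \<ge> cj + 1" by simp
      have sw: "I1 + Ij \<le> r^3 / (3 * (2 * real (c1 - 2) + 1)^2) + r^3 / (12 * (real cj)^2)"
        by (rule swap) (use cj2 c in auto)
      have "(r^3 / 12) * (1 / (real (c1 - 1) + 1/2)^2 + 1 / (real (cj - 1))^2)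
          \<le> (r^3 / 12) * (1 / (real (c1 - 2) + 1/2)^2 + 1 / (real cj)^2)"
        using sw L1 LBj' unfolding conv1 conv2 by (simp add: distrib_left)
      then have "1 / (real (c1 - 1) + 1/2)^2 + 1 / (real (cj - 1))^2
          \<le> 1 / (real (c1 - 2) + 1/2)^2 + 1 / (real cj)^2"
        using r3 by simp
      moreover have "real (c1 - 1) + 1/2 = real c1 - 1/2" "real (c1 - 2) + 1/2 = (real c1 - 1/2) - 1"
        "real (cj - 1) = real cj - 1" using c cj2 by auto
      ultimately have "1 / (real c1 - 1/2)^2 + 1 / (real cj - 1)^2
          \<le> 1 / (real c1 - 1/2 - 1)^2 + 1 / (real cj)^2" by simp
      moreover have "1 / (real cj)^2 + 1 / (real c1 - 1/2 - 1)^2 < 1 / (real cj - 1)^2 + 1 / (real c1 - 1/2)^2"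
        by (rule phi_mono) (use c cj2 in auto)
      ultimately show False by linarith
    qed
    have Bc: "cj \<le> c1 + 1"
    proof (rule ccontr)
      assume "\<not> cj \<le> c1 + 1"
      then have c: "cj \<ge> c1 + 2" by simp
      have sw: "I1 + Ij \<le> r^3 / (3 * (2 * real c1 + 1)^2) + r^3 / (12 * (real (cj - 2))^2)"
        by (rule swap) (use c1pos c in auto)
      have "(r^3 / 12) * (1 / (real (c1 - 1) + 1/2)^2 + 1 / (real (cj - 1))^2)
          \<le> (r^3 / 12) * (1 / (real c1 + 1/2)^2 + 1 / (real (cj - 2))^2)"
        using sw L1 LBj' unfolding conv1 conv2 by (simp add: distrib_left)
      then have "1 / (real (c1 - 1) + 1/2)^2 + 1 / (real (cj - 1))^2
          \<le> 1 / (real c1 + 1/2)^2 + 1 / (real (cj - 2))^2"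
        using r3 by simp
      moreover have "real (c1 - 1) + 1/2 = (real c1 + 1/2) - 1" "real (cj - 2) = (real cj - 1) - 1"
        "real (cj - 1) = real cj - 1" using c c1pos by auto
      ultimately have "1 / (real c1 + 1/2 - 1)^2 + 1 / (real cj - 1)^2
          \<le> 1 / (real c1 + 1/2)^2 + 1 / (real cj - 1 - 1)^2" by simp
      moreover have "1 / (real c1 + 1/2)^2 + 1 / (real cj - 1 - 1)^2 < 1 / (real c1 + 1/2 - 1)^2 + 1 / (real cj - 1)^2"
        by (rule phi_mono) (use c c1pos in auto)
      ultimately show False by linarith
    qed
    show ?thesis using A Bc by simp
  qed
  have "c1 = card (S \<inter> {0 .. 1 / real k})" by (simp add: c1_def r_def)
  moreover have "cj = card (S \<inter> {real (j - 1) / real k .. real j / real k})" by (simp add: cj_def l_def u_def)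
  ultimately show ?thesis using main by auto
qed

end
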